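(* Let $P_0\subset\mathbb{H}^4$ be the Coxeter polytope with facets $\mathbf{1},\dots,\mathbf{7}$ whose Coxeter diagram is the cycle $6-5-4-3-2-1-7-6$ with labels $m_{65}=4$, $m_{54}=4$, $m_{43}=6$, $m_{32}=4$, $m_{21}=\infty$, $m_{17}=4$, $m_{76}=6$ (all other pairs meeting orthogonally). Let $P_0,P_1,\dots$ be a sequence of polytopes with $P_{n+1}=P_n\cup r_{F_n}(P_n)$, where $F_n$ is a non-compact admissible facet of $P_n$ and $r_{F_n}$ is the reflection of $\mathbb{H}^4$ in the hyperplane containing $F_n$. If a facet of $P_n$ of type $i$ and a facet of $P_n$ of type $j$ intersect, with $i\neq j$, then their dihedral angle equals the dihedral angle between the facets $\mathbf{i}$ and $\mathbf{j}$ of $P_0$; in particular the facets $\mathbf{i}$ and $\mathbf{j}$ of $P_0$ intersect.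
   Context: A facet $F$ of a polytope $P$ is admissible if whenever it intersects another facet $K$ of $P$, the dihedral angle between $F$ and $K$ equals $\pi/(2k)$ for some $k\in\mathbb{N}$. By construction each $P_n$ is tessellated by copies of $P_0$ (images of $P_0$ under compositions of the reflections used), and this induces a tessellation of each facet of $P_n$ by copies of facets of $P_0$; a facet of $P_n$ is of type $i$ if it is tessellated by copies of the facet $\mathbf{i}$ of $P_0$. *)

theory Defs
  imports "HOL-Analysis.Analysis"
begin

text \<open>Minkowski bilinear form of signature (4,1) on real^5; coordinate 0 is the time coordinate.\<close>
definition mink :: "real^5 \<Rightarrow> real^5 \<Rightarrow> real" where
  "mink x y = (\<Sum>i\<in>UNIV. x$i * y$i) - 2 * (x$0 * y$0)"

definition Hyp :: "(real^5) set" where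
  "Hyp = {x. mink x x = -1 \<and> x$0 > 0}"

definition hplane :: "real^5 \<Rightarrow> (real^5) set" where
  "hplane e = {x \<in> Hyp. mink x e = 0}"

definition halfspace :: "real^5 \<Rightarrow> (real^5) set" where
  "halfspace e = {x \<in> Hyp. mink x e \<le> 0}"

text \<open>Reflection in the hyperplane orthogonal to e (mink e e = 1).\<close>
definition hrefl :: "real^5 \<Rightarrow> real^5 \<Rightarrow> real^5" where
  "hrefl e x = x - (2 * mink x e) *\<^sub>R e"

text \<open>F is a facet of P \<subseteq> H^4: F is the intersection of P with a supporting hyperplane,
  and F is 3-dimensional (its linear span in R^5 is 4-dimensional).\<close>
definition supports :: "(real^5) set \<Rightarrow> (real^5) set \<Rightarrow> real^5 \<Rightarrow> bool" where
  "supports P F e \<longleftrightarrow> mink e e = 1 \<and> P \<subseteq> halfspace e \<and> F = P \<inter> hplane e"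

definition is_facet :: "(real^5) set \<Rightarrow> (real^5) set \<Rightarrow> bool" where
  "is_facet P F \<longleftrightarrow> P \<subseteq> Hyp \<and> (\<exists>e. supports P F e) \<and> dim F = 4"

definition normal :: "(real^5) set \<Rightarrow> (real^5) set \<Rightarrow> real^5" where
  "normal P F = (THE e. supports P F e)"

definition dihedral :: "(real^5) set \<Rightarrow> (real^5) set \<Rightarrow> (real^5) set \<Rightarrow> real" where
  "dihedral P F K = arccos (- mink (normal P F) (normal P K))"

definition admissible :: "(real^5) set \<Rightarrow> (real^5) set \<Rightarrow> bool" where
  "admissible P F \<longleftrightarrow> is_facet P F \<and>
     (\<forall>K. is_facet P K \<and> K \<noteq> F \<and> F \<inter> K \<noteq> {} \<longrightarrow>
        (\<exists>k::nat. k \<ge> 1 \<and> dihedral P F K = pi / (2 * real k)))"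

text \<open>Gram entries mink e_i e_j = - cos(pi/m_ij),
  with -1 for label \<infinity>.\<close>
definition cox_gram :: "nat \<Rightarrow> nat \<Rightarrow> real" where
  "cox_gram i j =
     (if i = j then 1
      else if {i,j} = {6,5} \<or> {i,j} = {5,4} \<or> {i,j} = {3,2} \<or> {i,j} = {1,7} then - cos (pi / 4)
      else if {i,j} = {4,3} \<or> {i,j} = {7,6} then - cos (pi / 6)
      else if {i,j} = {2,1} then -1
      else 0)"

definition polytope_of :: "(nat \<Rightarrow> real^5) \<Rightarrow> (real^5) set" where
  "polytope_of e = Hyp \<inter> {x. \<forall>i\<in>{1..7}. mink x (e i) \<le> 0}"

definition cfacet :: "(nat \<Rightarrow> real^5) \<Rightarrow> nat \<Rightarrow> (real^5) set" where
  "cfacet e i = polytope_of e \<inter> hplane (e i)"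

text \<open>The isometries g such that the copies g(P_0) tessellate P_n.\<close>
primrec tiles :: "(nat \<Rightarrow> (real^5) set) \<Rightarrow> (nat \<Rightarrow> (real^5) set) \<Rightarrow> nat
    \<Rightarrow> (real^5 \<Rightarrow> real^5) set" where
  "tiles P F 0 = {id}"
| "tiles P F (Suc n) = tiles P F n \<union> ((\<lambda>g. hrefl (normal (P n) (F n)) \<circ> g) ` tiles P F n)"

text \<open>A facet G of P_n is of type i if it is tessellated by copies of facet i of P_0,
  i.e. it is the union of the copies g(facet i), g a tile of P_n, that it contains.\<close>
definition of_type :: "(nat \<Rightarrow> real^5) \<Rightarrow> (nat \<Rightarrow> (real^5) set) \<Rightarrow> (nat \<Rightarrow> (real^5) set)
    \<Rightarrow> nat \<Rightarrow> (real^5) set \<Rightarrow> nat \<Rightarrow> bool" where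
  "of_type e P F n G i \<longleftrightarrow>
     G = \<Union> {g ` cfacet e i | g. g \<in> tiles P F n \<and> g ` cfacet e i \<subseteq> G}"

end

theory Submission
  imports Defs
begin


definition Jm :: "real^5 \<Rightarrow> real^5" where
  "Jm v = (\<chi> k. if k = 0 then - (v$k) else v$k)"

lemma mink_inner: "mink x y = x \<bullet> (Jm y)"
proof -
  have "x \<bullet> Jm y = (\<Sum>i\<in>UNIV. x$i * (if i = 0 then - (y$i) else y$i))"
    by (simp add: inner_vec_def Jm_def)
  also have "\<dots> = (\<Sum>i\<in>UNIV. x$i * y$i - (if i = 0 then 2 * (x$i * y$i) else 0))"
    by (rule sum.cong) auto
  also have "\<dots> = (\<Sum>i\<in>UNIV. x$i * y$i) - 2 * (x$0 * y$0)"
    by (simp add: sum_subtractf)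
  finally show ?thesis by (simp add: mink_def)
qed

lemma mink_sym: "mink x y = mink y x"
  by (simp add: mink_def mult.commute)

lemma mink_add_left: "mink (x + y) z = mink x z + mink y z"
  by (simp add: mink_inner inner_add_left)
lemma mink_add_right: "mink z (x + y) = mink z x + mink z y"
  by (metis mink_sym mink_add_left)
lemma mink_diff_left: "mink (x - y) z = mink x z - mink y z"
  by (simp add: mink_inner inner_diff_left)
lemma mink_diff_right: "mink z (x - y) = mink z x - mink z y"
  by (metis mink_sym mink_diff_left)
lemma mink_scale_left: "mink (c *\<^sub>R x) z = c * mink x z"
  by (simp add: mink_inner)
lemma mink_scale_right: "mink z (c *\<^sub>R x) = c * mink z x"
  by (metis mink_sym mink_scale_left)
lemma mink_neg_left: "mink (- x) z = - mink x z"
  by (simp add: mink_inner)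
lemma mink_neg_right: "mink z (- x) = - mink z x"
  by (metis mink_sym mink_neg_left)
lemma mink_zero[simp]: "mink 0 z = 0" "mink z 0 = 0"
  by (simp_all add: mink_def)

lemmas mink_simps = mink_add_left mink_add_right mink_diff_left mink_diff_right
  mink_scale_left mink_scale_right mink_neg_left mink_neg_right

lemma Jm_Jm[simp]: "Jm (Jm v) = v"
  by (simp add: Jm_def vec_eq_iff)
lemma Jm_scale: "Jm (c *\<^sub>R v) = c *\<^sub>R Jm v"
  by (simp add: Jm_def vec_eq_iff)
lemma Jm_zero_iff: "Jm v = 0 \<longleftrightarrow> v = 0"
  by (metis Jm_Jm Jm_scale scale_zero_left)

lemma mink_nondeg: assumes "\<And>y. mink y v = 0" shows "v = 0"
proof -
  have "Jm v \<bullet> Jm v = 0" using assms[of "Jm v"] by (simp add: mink_inner)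
  thus ?thesis by (simp add: Jm_zero_iff)
qed

lemma OC:
  fixes S :: "(real^5) set"
  assumes dS: "dim S = 4" and u0: "u \<noteq> 0"
    and Su: "\<forall>y\<in>S. mink y u = 0" and Sw: "\<forall>y\<in>S. mink y w = 0"
  shows "\<exists>c. w = c *\<^sub>R u"
proof -
  let ?U = "{y. Jm u \<bullet> y = 0}"
  let ?W = "{y. Jm w \<bullet> y = 0}"
  have Ju: "Jm u \<noteq> 0" using u0 Jm_zero_iff by blast
  have dU: "dim ?U = 4" using dim_hyperplane[OF Ju] by simp
  have SU: "S \<subseteq> ?U" using Su by (auto simp: mink_inner inner_commute)
  have SW: "S \<subseteq> ?W" using Sw by (auto simp: mink_inner inner_commute)
  have "span S \<subseteq> ?U" using SU by (simp add: span_minimal subspace_hyperplane)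
  hence eq: "span S = ?U"
    by (intro subspace_dim_equal) (auto simp: dU dS subspace_hyperplane)
  have "span S \<subseteq> ?W" using SW by (simp add: span_minimal subspace_hyperplane)
  hence UW: "?U \<subseteq> ?W" using eq by simp
  define c where "c = (Jm w \<bullet> Jm u) / (Jm u \<bullet> Jm u)"
  define y where "y = Jm w - c *\<^sub>R Jm u"
  have nz: "Jm u \<bullet> Jm u \<noteq> 0" using Ju by simp
  have "Jm u \<bullet> y = 0" using nz by (simp add: y_def c_def inner_diff_right inner_commute)
  hence y1: "Jm w \<bullet> y = 0" using UW by auto
  have "y \<bullet> y = 0"
    using y1 \<open>Jm u \<bullet> y = 0\<close> by (simp add: y_def inner_diff_left inner_commute)
  hence "y = 0" by simp
  hence "Jm w = c *\<^sub>R Jm u" by (simp add: y_def)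
  hence "Jm (Jm w) = Jm (c *\<^sub>R Jm u)" by simp
  hence "w = c *\<^sub>R u" by (simp add: Jm_scale)
  thus ?thesis by blast
qed

definition sp :: "real^5 \<Rightarrow> real^5" where
  "sp v = (\<chi> k. if k = 0 then 0 else v$k)"

lemma mink_sp: "mink x y = sp x \<bullet> sp y - x$0 * y$0"
proof -
  have "sp x \<bullet> sp y = (\<Sum>i\<in>UNIV. x$i * y$i - (if i = 0 then x$i * y$i else 0))"
    by (simp add: inner_vec_def sp_def) (rule sum.cong, auto)
  also have "\<dots> = (\<Sum>i\<in>UNIV. x$i * y$i) - x$0 * y$0"
    by (simp add: sum_subtractf)
  finally show ?thesis by (simp add: mink_def)
qed

lemma timelike_perp:
  assumes x: "mink x x = -1" and v: "mink v x = 0"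
  shows "mink v v \<ge> 0 \<and> (mink v v = 0 \<longrightarrow> v = 0)"
proof -
  let ?s = "sp v \<bullet> sp v" and ?t = "sp x \<bullet> sp x" and ?m = "sp v \<bullet> sp x"
  have xx: "?t = x$0 * x$0 - 1" using x by (simp add: mink_sp)
  have vx: "?m = v$0 * x$0" using v by (simp add: mink_sp)
  have CS: "?m\<^sup>2 \<le> ?s * ?t" by (rule Cauchy_Schwarz_ineq)
  have s0: "?s \<ge> 0" by simp
  have x0: "x$0 * x$0 \<ge> 1" using xx by (metis inner_ge_zero le_diff_eq add_0)
  have "(v$0)^2 * (x$0 * x$0) \<le> ?s * (x$0 * x$0 - 1)"
    using CS vx xx by (simp add: power2_eq_square algebra_simps)
  hence key: "(?s - (v$0)^2) * (x$0 * x$0) \<ge> ?s" by (simp add: algebra_simps)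
  have mv: "mink v v = ?s - (v$0)^2" by (simp add: mink_sp power2_eq_square)
  have "?s - (v$0)^2 \<ge> 0"
  proof (rule ccontr)
    assume "\<not> ?s - (v$0)^2 \<ge> 0"
    hence "(?s - (v$0)^2) * (x$0 * x$0) < 0" using x0
      by (simp add: mult_neg_pos)
    thus False using key s0 by linarith
  qed
  moreover have "mink v v = 0 \<longrightarrow> v = 0"
  proof
    assume "mink v v = 0"
    hence "?s \<le> 0" using key mv by simp
    hence s: "?s = 0" using s0 by linarith
    hence "(v$0)^2 = 0" using mv \<open>mink v v = 0\<close> by simp
    hence "v$0 = 0" by simp
    moreover have "sp v = 0" using s by simp
    ultimately show "v = 0"
      by (simp add: vec_eq_iff sp_def) (metis)
  qed
  ultimately show ?thesis using mv by simp
qed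

lemma hrefl_linear: "linear (hrefl b)"
  unfolding hrefl_def
  by (rule linearI) (simp_all add: mink_simps scaleR_add_left scaleR_right_diff_distrib algebra_simps)

lemma hrefl_mink: assumes "mink b b = 1"
  shows "mink (hrefl b x) (hrefl b y) = mink x y"
  unfolding hrefl_def mink_simps
  using assms mink_sym[of b x] mink_sym[of b y] by (simp add: algebra_simps)

lemma hrefl_invol: assumes "mink b b = 1"
  shows "hrefl b (hrefl b x) = x"
  unfolding hrefl_def mink_simps
  using assms by (simp add: algebra_simps)

definition isom :: "(real^5 \<Rightarrow> real^5) \<Rightarrow> bool" where
  "isom g \<longleftrightarrow> linear g \<and> (\<forall>x y. mink (g x) (g y) = mink x y)"

lemma isom_inj: assumes "isom g" shows "inj g"
proof (rule injI)
  fix x y assume "g x = g y"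
  have lin: "linear g" using assms by (simp add: isom_def)
  have "\<And>z. mink (x - y) z = 0"
  proof -
    fix z
    have "mink (x - y) z = mink (g (x - y)) (g z)" using assms by (simp add: isom_def)
    also have "\<dots> = mink (g x - g y) (g z)" using lin by (simp add: linear_diff)
    finally show "mink (x - y) z = 0" using \<open>g x = g y\<close> by simp
  qed
  hence "\<And>z. mink z (x - y) = 0" by (metis mink_sym)
  hence "x - y = 0" by (rule mink_nondeg)
  thus "x = y" by simp
qed

lemma isom_dim: assumes "isom g" shows "dim (g ` S) = dim S"
  using assms isom_inj[OF assms] by (meson dim_image_eq inj_on_subset top_greatest isom_def)

lemma isom_hrefl: "mink b b = 1 \<Longrightarrow> isom (hrefl b)"
  by (simp add: isom_def hrefl_linear hrefl_mink)

lemma isom_comp: "isom f \<Longrightarrow> isom g \<Longrightarrow> isom (f \<circ> g)"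
  by (simp add: isom_def linear_compose)

lemma isom_id: "isom id"
  by (simp add: isom_def linear_id)

lemma cox_diag: "cox_gram i i = 1" by (simp add: cox_gram_def)
lemma cox_13: "cox_gram 1 3 = 0" by (simp add: cox_gram_def doubleton_eq_iff)
lemma cox_nonpos: "i \<noteq> j \<Longrightarrow> cox_gram i j \<le> 0"
proof -
  have "cos (pi/4) \<ge> 0" "cos (pi/6) \<ge> 0" by (auto intro!: cos_ge_zero)
  thus "i \<noteq> j \<Longrightarrow> cox_gram i j \<le> 0" by (simp add: cox_gram_def)
qed

lemma P0_nondeg:
  assumes gram: "\<forall>i\<in>{1..7}. \<forall>j\<in>{1..7}. mink (e i) (e j) = cox_gram i j"
    and facets0: "\<forall>i\<in>{1..7}. is_facet (polytope_of e) (cfacet e i)"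
    and v: "mink v v = 1"
    and H: "\<forall>y\<in>polytope_of e. mink y v = 0"
  shows False
proof -
  have ee: "\<And>i. i \<in> {1..7} \<Longrightarrow> mink (e i) (e i) = 1"
    using gram cox_diag by simp
  have key: "\<And>i. i \<in> {1..7} \<Longrightarrow> \<exists>c. v = c *\<^sub>R e i"
  proof -
    fix i :: nat assume i: "i \<in> {1..7}"
    have d: "dim (cfacet e i) = 4" using facets0 i by (simp add: is_facet_def)
    have nz: "e i \<noteq> 0" using ee[OF i] by auto
    show "\<exists>c. v = c *\<^sub>R e i"
      by (rule OC[OF d nz]) (use H in \<open>auto simp: cfacet_def hplane_def\<close>)
  qed
  obtain c1 where c1: "v = c1 *\<^sub>R e 1" using key[of 1] by auto
  obtain c3 where c3: "v = c3 *\<^sub>R e 3" using key[of 3] by auto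
  have g13: "mink (e 1) (e 3) = 0" using gram cox_13 by simp
  have "mink (e 1) v = c1" using c1 ee[of 1] by (simp add: mink_simps)
  moreover have "mink (e 1) v = 0" using c3 g13 by (simp add: mink_simps)
  ultimately have "v = 0" using c1 by simp
  thus False using v by simp
qed

lemma sup_unique:
  assumes gram: "\<forall>i\<in>{1..7}. \<forall>j\<in>{1..7}. mink (e i) (e j) = cox_gram i j"
    and facets0: "\<forall>i\<in>{1..7}. is_facet (polytope_of e) (cfacet e i)"
    and Q: "polytope_of e \<subseteq> Q"
    and s1: "supports Q G e1" and s2: "supports Q G e2" and d: "dim G = 4"
  shows "e1 = e2"
proof -
  have n1: "mink e1 e1 = 1" and n2: "mink e2 e2 = 1" using s1 s2 by (auto simp: supports_def)
  have nz: "e1 \<noteq> 0" using n1 by auto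
  have o1: "\<forall>y\<in>G. mink y e1 = 0" and o2: "\<forall>y\<in>G. mink y e2 = 0"
    using s1 s2 by (auto simp: supports_def hplane_def)
  obtain c where c: "e2 = c *\<^sub>R e1"
    using OC[OF d nz o1 o2] by auto
  have "c * c = 1" using n2 n1 c by (simp add: mink_simps)
  hence "c = 1 \<or> c = -1"
    by (metis mult_cancel_left mult_minus_left mult_minus_right square_eq_1_iff)
  moreover have "c \<noteq> -1"
  proof
    assume "c = -1"
    hence "\<forall>y\<in>polytope_of e. mink y e1 = 0"
      using s1 s2 c Q by (force simp: supports_def halfspace_def mink_simps)
    thus False using P0_nondeg[OF gram facets0 n1] by blast
  qed
  ultimately show ?thesis using c by simp
qed

lemma normal_eq:
  assumes gram: "\<forall>i\<in>{1..7}. \<forall>j\<in>{1..7}. mink (e i) (e j) = cox_gram i j"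
    and facets0: "\<forall>i\<in>{1..7}. is_facet (polytope_of e) (cfacet e i)"
    and Q: "polytope_of e \<subseteq> Q"
    and s: "supports Q G a" and d: "dim G = 4"
  shows "normal Q G = a"
  unfolding normal_def
  using sup_unique[OF gram facets0 Q _ _ d] s by blast

lemma normal_supports:
  assumes gram: "\<forall>i\<in>{1..7}. \<forall>j\<in>{1..7}. mink (e i) (e j) = cox_gram i j"
    and facets0: "\<forall>i\<in>{1..7}. is_facet (polytope_of e) (cfacet e i)"
    and Q: "polytope_of e \<subseteq> Q"
    and f: "is_facet Q G"
  shows "supports Q G (normal Q G)"
proof -
  obtain a where a: "supports Q G a" using f by (auto simp: is_facet_def)
  thus ?thesis using normal_eq[OF gram facets0 Q a] f by (simp add: is_facet_def)
qed

lemma facet_normal_tile: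
  assumes gram: "\<forall>i\<in>{1..7}. \<forall>j\<in>{1..7}. mink (e i) (e j) = cox_gram i j"
    and facets0: "\<forall>i\<in>{1..7}. is_facet (polytope_of e) (cfacet e i)"
    and g: "isom g" and gQ: "g ` polytope_of e \<subseteq> Q"
    and i: "i \<in> {1..7}" and a: "mink a a = 1" and aQ: "\<forall>y\<in>Q. mink y a \<le> 0"
    and sub: "\<forall>z\<in>cfacet e i. mink (g z) a = 0"
  shows "a = g (e i)"
proof -
  have d: "dim (g ` cfacet e i) = 4" using facets0 i isom_dim[OF g] by (simp add: is_facet_def)
  have ee: "mink (e i) (e i) = 1" using gram i cox_diag by simp
  have gee: "mink (g (e i)) (g (e i)) = 1" using ee g by (simp add: isom_def)
  hence nz: "g (e i) \<noteq> 0" by auto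
  have o1: "\<forall>y\<in>g ` cfacet e i. mink y (g (e i)) = 0"
    using g by (auto simp: isom_def cfacet_def hplane_def)
  obtain c where c: "a = c *\<^sub>R g (e i)"
    using OC[OF d nz o1] sub by auto
  have "c * c = 1" using a gee c by (simp add: mink_simps)
  hence "c = 1 \<or> c = -1"
    by (metis mult_cancel_left mult_minus_left mult_minus_right square_eq_1_iff)
  moreover have "c \<noteq> -1"
  proof
    assume "c = -1"
    have "\<forall>y\<in>polytope_of e. mink y (e i) = 0"
    proof
      fix y assume y: "y \<in> polytope_of e"
      have "mink (g y) a \<le> 0" using aQ gQ y by auto
      hence "mink y (e i) \<ge> 0" using \<open>c = -1\<close> c g by (simp add: mink_simps isom_def)
      moreover have "mink y (e i) \<le> 0" using y i by (simp add: polytope_of_def)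
      ultimately show "mink y (e i) = 0" by simp
    qed
    thus False using P0_nondeg[OF gram facets0 ee] by blast
  qed
  ultimately show ?thesis using c by simp
qed

lemma core:
  assumes x: "mink x x = -1" and xa: "mink x a = 0" and xb: "mink x b = 0" and xc: "mink x c = 0"
    and aa: "mink a a = 1" and bb: "mink b b = 1" and cc: "mink c c = 1"
    and ac: "mink a c \<le> 0"
    and al: "mink a b \<le> - sqrt 2 / 2" and be: "mink c b \<le> - sqrt 2 / 2"
  shows "hrefl b a = - c"
proof -
  define s where "s = sqrt 2"
  have ss: "s * s = 2" by (simp add: s_def)
  have s0: "s > 0" by (simp add: s_def)
  define v where "v = a + c + s *\<^sub>R b"
  have vx: "mink v x = 0" using xa xb xc
    by (simp add: v_def mink_simps mink_sym[of _ x])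
  have vv: "mink v v = 4 + 2 * mink a c + 2 * s * (mink a b + mink c b)"
    using aa bb cc ss
    by (simp add: v_def mink_simps mink_sym[of c a] mink_sym[of b a] mink_sym[of b c] algebra_simps)
  have tp: "mink v v \<ge> 0 \<and> (mink v v = 0 \<longrightarrow> v = 0)" by (rule timelike_perp[OF x vx])
  have sum: "mink a b + mink c b \<le> - s" using al be by (simp add: s_def)
  have "2 * s * (mink a b + mink c b) \<le> 2 * s * (- s)"
    using sum s0 by (intro mult_left_mono) auto
  hence le: "2 * s * (mink a b + mink c b) \<le> -4" using ss by simp
  have "mink v v = 0" using tp vv le ac by linarith
  hence v0: "v = 0" using tp by simp
  have "2 * s * (mink a b + mink c b) = -4" using tp vv le ac \<open>mink v v = 0\<close> by linarith
  hence "mink a b + mink c b = - s" using s0 ss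
    by (metis (no_types, opaque_lifting) mult_minus_right mult_cancel_left mult.assoc
          mult_2 mult_zero_left numeral_Bit0 numeral_One order_less_irrefl)
  hence ab: "mink a b = - s / 2" using al be by (simp add: s_def)
  have bb': "s *\<^sub>R b = - a - c" using v0 unfolding v_def
    by (metis add.commute add_diff_cancel_left' diff_0 diff_diff_eq2 eq_neg_iff_add_eq_0 uminus_add_conv_diff)
  have "hrefl b a = a + s *\<^sub>R b" using ab by (simp add: hrefl_def)
  also have "\<dots> = - c" using bb' by simp
  finally show ?thesis .
qed




theorem proposition3p12:
  fixes e :: "nat \<Rightarrow> real^5"
    and P :: "nat \<Rightarrow> (real^5) set"
    and F :: "nat \<Rightarrow> (real^5) set"
  assumes gram: "\<forall>i\<in>{1..7}. \<forall>j\<in>{1..7}. mink (e i) (e j) = cox_gram i j"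
    and facets0: "\<forall>i\<in>{1..7}. is_facet (polytope_of e) (cfacet e i)"
    and P0: "P 0 = polytope_of e"
    and step: "\<forall>n. is_facet (P n) (F n) \<and> \<not> compact (F n) \<and> admissible (P n) (F n)
                    \<and> P (Suc n) = P n \<union> hrefl (normal (P n) (F n)) ` P n"
  shows "\<forall>n i j G K. i \<in> {1..7} \<and> j \<in> {1..7} \<and> i \<noteq> j
           \<and> is_facet (P n) G \<and> is_facet (P n) K
           \<and> of_type e P F n G i \<and> of_type e P F n K j \<and> G \<inter> K \<noteq> {}
           \<longrightarrow> dihedral (P n) G K = dihedral (polytope_of e) (cfacet e i) (cfacet e j)
               \<and> cfacet e i \<inter> cfacet e j \<noteq> {}"
proof -
  let ?P0 = "polytope_of e"
  let ?T = "tiles P F"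
  define b where "b n = normal (P n) (F n)" for n
  define r where "r n = hrefl (b n)" for n
  have Psuc: "\<And>n. P (Suc n) = P n \<union> r n ` P n" using step by (simp add: r_def b_def)
  have mono: "\<And>n. P n \<subseteq> P (Suc n)" using Psuc by auto
  have P0sub: "\<And>n. ?P0 \<subseteq> P n"
  proof -
    fix n show "?P0 \<subseteq> P n"
      by (induction n) (use P0 mono in auto)
  qed
  have PH: "\<And>n. P n \<subseteq> Hyp" using step by (auto simp: is_facet_def)
  have supF: "\<And>n. supports (P n) (F n) (b n)"
    unfolding b_def using normal_supports[OF gram facets0 P0sub] step by blast
  have bb: "\<And>n. mink (b n) (b n) = 1" using supF by (simp add: supports_def)
  have Pb: "\<And>n y. y \<in> P n \<Longrightarrow> mink y (b n) \<le> 0"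
    using supF by (auto simp: supports_def halfspace_def)
  have Fn: "\<And>n. F n = P n \<inter> hplane (b n)" using supF by (simp add: supports_def)
  have Tsuc: "\<And>n. ?T (Suc n) = ?T n \<union> (\<lambda>g. r n \<circ> g) ` ?T n"
    by (simp add: r_def b_def)
  have rr: "\<And>n y. r n (r n y) = y" using bb by (simp add: r_def hrefl_invol)
  have rmink: "\<And>n x y. mink (r n x) (r n y) = mink x y" using bb by (simp add: r_def hrefl_mink)
  have rb: "\<And>n z. mink (r n z) (b n) = - mink z (b n)"
    using bb by (simp add: r_def hrefl_def mink_simps)
  have risom: "\<And>n. isom (r n)" using bb by (simp add: r_def isom_hrefl)
  have tprop: "\<And>n g. g \<in> ?T n \<Longrightarrow> isom g \<and> g ` ?P0 \<subseteq> P n"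
  proof -
    fix n show "\<And>g. g \<in> ?T n \<Longrightarrow> isom g \<and> g ` ?P0 \<subseteq> P n"
    proof (induction n)
      case 0 thus ?case using P0 isom_id isom_id[unfolded id_def] by simp
    next
      case (Suc n)
      from Suc.prems[unfolded Tsuc] show ?case
      proof
        assume "g \<in> ?T n" thus ?thesis using Suc.IH mono by blast
      next
        assume "g \<in> (\<lambda>g. r n \<circ> g) ` ?T n"
        then obtain g' where g': "g' \<in> ?T n" "g = r n \<circ> g'" by auto
        have "isom g" using g' Suc.IH risom isom_comp by blast
        have "g' ` ?P0 \<subseteq> P n" using g' Suc.IH by blast
        hence "g ` ?P0 \<subseteq> r n ` P n" using g' by (auto simp: image_comp[symmetric])
        hence "g ` ?P0 \<subseteq> P (Suc n)" using Psuc by auto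
        moreover note \<open>isom g\<close>
        ultimately show ?thesis by blast
      qed
    qed
  qed
  have tmink: "\<And>n g x y. g \<in> ?T n \<Longrightarrow> mink (g x) (g y) = mink x y"
    using tprop by (simp add: isom_def)
  have ee: "\<And>i. i \<in> {1..7} \<Longrightarrow> mink (e i) (e i) = 1" using gram cox_diag by simp
  have cfP0: "\<And>i. cfacet e i \<subseteq> ?P0" by (auto simp: cfacet_def)
  have xHyp: "\<And>x. x \<in> Hyp \<Longrightarrow> mink x x = -1" by (simp add: Hyp_def)
  have adm: "\<And>n g i x. g \<in> ?T n \<Longrightarrow> i \<in> {1..7} \<Longrightarrow> x \<in> g ` cfacet e i \<Longrightarrow> mink x (b n) = 0
     \<Longrightarrow> (\<forall>y\<in>P n. mink y (g (e i)) \<le> 0) \<Longrightarrow> (\<forall>y\<in>P n. mink y (r n (g (e i))) \<le> 0)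
     \<Longrightarrow> mink (g (e i)) (b n) = 0 \<or> mink (g (e i)) (b n) \<le> - sqrt 2 / 2"
  proof -
    fix n g i x
    assume g: "g \<in> ?T n" and i: "i \<in> {1..7}" and x: "x \<in> g ` cfacet e i" and xb: "mink x (b n) = 0"
      and B1: "\<forall>y\<in>P n. mink y (g (e i)) \<le> 0" and B2: "\<forall>y\<in>P n. mink y (r n (g (e i))) \<le> 0"
    define a where "a = g (e i)"
    define G0 where "G0 = P n \<inter> hplane a"
    have gi: "isom g" and gP: "g ` ?P0 \<subseteq> P n" using tprop[OF g] by auto
    have aa: "mink a a = 1" using tmink[OF g] ee[OF i] by (simp add: a_def)
    have sub: "g ` cfacet e i \<subseteq> G0"
    proof
      fix y assume "y \<in> g ` cfacet e i"
      then obtain z where z: "z \<in> cfacet e i" "y = g z" by auto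
      have "y \<in> P n" using z gP cfP0 by blast
      moreover have "mink y a = 0" using z tmink[OF g] by (simp add: a_def cfacet_def hplane_def)
      ultimately show "y \<in> G0" using PH by (auto simp: G0_def hplane_def)
    qed
    have d4: "dim (g ` cfacet e i) = 4" using isom_dim[OF gi] facets0 i by (simp add: is_facet_def)
    have "Jm a \<noteq> 0" using aa Jm_zero_iff by force
    hence dH: "dim {y. Jm a \<bullet> y = 0} = 4" using dim_hyperplane[of "Jm a"] by simp
    have "G0 \<subseteq> {y. Jm a \<bullet> y = 0}" by (auto simp: G0_def hplane_def mink_inner inner_commute)
    hence "dim G0 \<le> 4" using dH dim_subset by metis
    moreover have "dim G0 \<ge> 4" using sub d4 dim_subset by metis
    ultimately have dG0: "dim G0 = 4" by simp
    have supG0: "supports (P n) G0 a"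
      using aa B1 PH by (auto simp: supports_def G0_def halfspace_def a_def)
    have isf: "is_facet (P n) G0" using supG0 dG0 PH by (auto simp: is_facet_def)
    have nG0: "normal (P n) G0 = a" by (rule normal_eq[OF gram facets0 P0sub supG0 dG0])
    have neq: "G0 \<noteq> F n"
    proof
      assume "G0 = F n"
      hence ba: "b n = a" using nG0 by (simp add: b_def)
      have "r n a = - a" using aa by (simp add: r_def ba hrefl_def scaleR_2)
      have "\<forall>y\<in>?P0. mink y a = 0"
      proof
        fix y assume "y \<in> ?P0"
        hence y: "y \<in> P n" using P0sub by blast
        have "mink y a \<le> 0" using B1 y by (simp add: a_def)
        moreover have "mink y (r n a) \<le> 0" using B2 y by (simp add: a_def)
        ultimately show "mink y a = 0" using \<open>r n a = - a\<close> by (simp add: mink_simps)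
      qed
      thus False using P0_nondeg[OF gram facets0 aa] by blast
    qed
    have xP: "x \<in> P n" using x gP cfP0 by blast
    have xa: "mink x a = 0" using x sub by (auto simp: G0_def hplane_def)
    have xG0: "x \<in> G0" using x sub by auto
    have xF: "x \<in> F n" using xP PH xb Fn by (auto simp: hplane_def)
    have ad: "admissible (P n) (F n)" using step by blast
    have ne: "F n \<inter> G0 \<noteq> {}" using xF xG0 by blast
    have "\<forall>K. is_facet (P n) K \<and> K \<noteq> F n \<and> F n \<inter> K \<noteq> {} \<longrightarrow>
        (\<exists>k::nat. k \<ge> 1 \<and> dihedral (P n) (F n) K = pi / (2 * real k))"
      using ad unfolding admissible_def by blast
    hence "\<exists>k::nat. k \<ge> 1 \<and> dihedral (P n) (F n) G0 = pi / (2 * real k)"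
      using isf neq ne by blast
    then obtain k :: nat where k: "k \<ge> 1" "dihedral (P n) (F n) G0 = pi / (2 * real k)"
      by blast
    have "dihedral (P n) (F n) G0 = arccos (- mink (b n) a)"
      unfolding dihedral_def nG0 b_def ..
    hence dih: "arccos (- mink (b n) a) = pi / (2 * real k)" using k(2) by simp
    have xx: "mink x x = -1" using xP PH xHyp by blast
    have ax: "mink a x = 0" using xa mink_sym[of a x] by simp
    have bx: "mink (b n) x = 0" using xb mink_sym[of "b n" x] by simp
    have ab: "mink a (b n) = mink (b n) a" by (rule mink_sym)
    have "mink (a + b n) x = 0" using ax bx by (simp add: mink_simps)
    hence "mink (a + b n) (a + b n) \<ge> 0" using timelike_perp[OF xx] by blast
    hence l1: "mink (b n) a \<ge> -1" using aa bb ab by (simp add: mink_simps)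
    have "mink (a - b n) x = 0" using ax bx by (simp add: mink_simps)
    hence "mink (a - b n) (a - b n) \<ge> 0" using timelike_perp[OF xx] by blast
    hence l2: "mink (b n) a \<le> 1" using aa bb ab by (simp add: mink_simps)
    have "cos (arccos (- mink (b n) a)) = - mink (b n) a"
      by (rule cos_arccos) (use l1 l2 in linarith)+
    hence cosv: "- mink (b n) a = cos (pi / (2 * real k))" using dih by simp
    show "mink (g (e i)) (b n) = 0 \<or> mink (g (e i)) (b n) \<le> - sqrt 2 / 2"
    proof (cases "k = 1")
      case True
      thus ?thesis using cosv mink_sym[of a "b n"] by (simp add: a_def)
    next
      case False
      hence k2: "k \<ge> 2" using k(1) by simp
      have "pi / (2 * real k) \<le> pi / 4"
        using k2 by (intro divide_left_mono) auto
      moreover have "0 \<le> pi / (2 * real k)" by simp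
      ultimately have "cos (pi / 4) \<le> cos (pi / (2 * real k))"
        by (intro cos_monotone_0_pi_le) auto
      hence "sqrt 2 / 2 \<le> - mink (b n) a" using cosv cos_45 by simp
      thus ?thesis using mink_sym[of a "b n"] by (simp add: a_def)
    qed
  qed
  define Inv where "Inv n \<longleftrightarrow> (\<forall>g\<in>?T n. \<forall>h\<in>?T n. \<forall>i\<in>{1..7}. \<forall>j\<in>{1..7}. \<forall>x.
      i \<noteq> j \<and> x \<in> g ` cfacet e i \<and> x \<in> h ` cfacet e j
      \<and> (\<forall>y\<in>P n. mink y (g (e i)) \<le> 0) \<and> (\<forall>y\<in>P n. mink y (h (e j)) \<le> 0)
      \<longrightarrow> mink (g (e i)) (h (e j)) = cox_gram i j \<and> cfacet e i \<inter> cfacet e j \<noteq> {})" for n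
  have mixed: "\<And>n g h i j x. Inv n \<Longrightarrow> g \<in> ?T n \<Longrightarrow> h \<in> ?T n \<Longrightarrow> i \<in> {1..7} \<Longrightarrow> j \<in> {1..7}
     \<Longrightarrow> i \<noteq> j \<Longrightarrow> x \<in> g ` cfacet e i \<Longrightarrow> x \<in> h ` cfacet e j \<Longrightarrow> mink x (b n) = 0
     \<Longrightarrow> (\<forall>y\<in>P n. mink y (g (e i)) \<le> 0) \<Longrightarrow> (\<forall>y\<in>P n. mink y (r n (g (e i))) \<le> 0)
     \<Longrightarrow> (\<forall>y\<in>P n. mink y (h (e j)) \<le> 0) \<Longrightarrow> (\<forall>y\<in>P n. mink y (r n (h (e j))) \<le> 0)
     \<Longrightarrow> mink (g (e i)) (r n (h (e j))) = cox_gram i j \<and> mink (r n (g (e i))) (h (e j)) = cox_gram i j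
         \<and> cfacet e i \<inter> cfacet e j \<noteq> {}"
  proof -
    fix n g h i j x
    assume I: "Inv n" and g: "g \<in> ?T n" and h: "h \<in> ?T n" and i: "i \<in> {1..7}" and j: "j \<in> {1..7}"
      and ij: "i \<noteq> j" and xg: "x \<in> g ` cfacet e i" and xh: "x \<in> h ` cfacet e j" and xb: "mink x (b n) = 0"
      and B1: "\<forall>y\<in>P n. mink y (g (e i)) \<le> 0" and B2: "\<forall>y\<in>P n. mink y (r n (g (e i))) \<le> 0"
      and B3: "\<forall>y\<in>P n. mink y (h (e j)) \<le> 0" and B4: "\<forall>y\<in>P n. mink y (r n (h (e j))) \<le> 0"
    define a where "a = g (e i)"
    define c where "c = h (e j)"
    have "mink (g (e i)) (h (e j)) = cox_gram i j \<and> cfacet e i \<inter> cfacet e j \<noteq> {}"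
      by (rule I[unfolded Inv_def, rule_format, OF g h i j, of x]) (intro conjI ij xg xh B1 B3)
    hence inv: "mink a c = cox_gram i j \<and> cfacet e i \<inter> cfacet e j \<noteq> {}"
      by (simp add: a_def c_def)
    have al: "mink a (b n) = 0 \<or> mink a (b n) \<le> - sqrt 2 / 2"
      using adm[OF g i xg xb B1 B2] by (simp add: a_def)
    have be: "mink c (b n) = 0 \<or> mink c (b n) \<le> - sqrt 2 / 2"
      using adm[OF h j xh xb B3 B4] by (simp add: c_def)
    have aa: "mink a a = 1" using tmink[OF g] ee[OF i] by (simp add: a_def)
    have cc: "mink c c = 1" using tmink[OF h] ee[OF j] by (simp add: c_def)
    have prod: "mink a (b n) = 0 \<or> mink c (b n) = 0"
    proof (rule ccontr)
      assume "\<not> ?thesis"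
      hence al': "mink a (b n) \<le> - sqrt 2 / 2" and be': "mink c (b n) \<le> - sqrt 2 / 2"
        using al be by linarith+
      have xP: "x \<in> P n" using xg tprop[OF g] cfP0 by blast
      have xx: "mink x x = -1" using xP PH xHyp by blast
      have xa: "mink x a = 0" using xg tmink[OF g] by (auto simp: a_def cfacet_def hplane_def)
      have xc: "mink x c = 0" using xh tmink[OF h] by (auto simp: c_def cfacet_def hplane_def)
      have ac: "mink a c \<le> 0" using inv cox_nonpos[OF ij] by simp
      have "hrefl (b n) a = - c" by (rule core[OF xx xa xb xc aa bb cc ac al' be'])
      hence rac: "r n a = - c" by (simp add: r_def)
      have "\<forall>y\<in>?P0. mink y c = 0"
      proof
        fix y assume "y \<in> ?P0"
        hence y: "y \<in> P n" using P0sub by blast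
        have "mink y c \<le> 0" using B3 y by (simp add: c_def)
        moreover have "mink y (r n a) \<le> 0" using B2 y by (simp add: a_def)
        ultimately show "mink y c = 0" using rac by (simp add: mink_simps)
      qed
      thus False using P0_nondeg[OF gram facets0 cc] by blast
    qed
    have e1: "mink a (r n c) = mink a c - 2 * mink c (b n) * mink a (b n)"
      by (simp add: r_def hrefl_def mink_simps)
    have e2: "mink (r n a) c = mink a c - 2 * mink a (b n) * mink c (b n)"
      using mink_sym[of "b n" c] by (simp add: r_def hrefl_def mink_simps)
    show "mink (g (e i)) (r n (h (e j))) = cox_gram i j \<and> mink (r n (g (e i))) (h (e j)) = cox_gram i j
         \<and> cfacet e i \<inter> cfacet e j \<noteq> {}"
      using e1 e2 prod inv unfolding a_def[symmetric] c_def[symmetric] by auto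
  qed
  have down: "\<And>n v. \<forall>y\<in>P (Suc n). mink y v \<le> 0 \<Longrightarrow>
      (\<forall>y\<in>P n. mink y v \<le> 0) \<and> (\<forall>y\<in>P n. mink y (r n v) \<le> 0)"
  proof -
    fix n v assume S: "\<forall>y\<in>P (Suc n). mink y v \<le> 0"
    have "\<forall>y\<in>P n. mink y v \<le> 0" using S mono by blast
    moreover have "\<forall>y\<in>P n. mink y (r n v) \<le> 0"
    proof
      fix y assume y: "y \<in> P n"
      have "r n y \<in> P (Suc n)" using y Psuc by auto
      hence "mink (r n y) (r n (r n v)) \<le> 0" using S rr by simp
      thus "mink y (r n v) \<le> 0" using rmink by simp
    qed
    ultimately show "(\<forall>y\<in>P n. mink y v \<le> 0) \<and> (\<forall>y\<in>P n. mink y (r n v) \<le> 0)" by blast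
  qed
  have unref: "\<And>n g' z S. g' \<in> ?T n \<Longrightarrow> z \<in> g' ` S \<Longrightarrow> S \<subseteq> ?P0 \<Longrightarrow> z \<in> P n \<and> mink z (b n) \<le> 0"
    using tprop Pb by blast
  have isref: "\<And>n g' z S. g' \<in> ?T n \<Longrightarrow> z \<in> (r n \<circ> g') ` S \<Longrightarrow> S \<subseteq> ?P0
      \<Longrightarrow> mink z (b n) \<ge> 0 \<and> r n z \<in> g' ` S"
  proof -
    fix n g' z S assume g': "g' \<in> ?T n" and z: "z \<in> (r n \<circ> g') ` S" and S: "S \<subseteq> ?P0"
    then obtain w where w: "w \<in> S" "z = r n (g' w)" by auto
    have "g' w \<in> P n" using tprop[OF g'] w S by blast
    hence "mink (g' w) (b n) \<le> 0" using Pb by blast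
    hence "mink z (b n) \<ge> 0" using w rb by simp
    moreover have "r n z \<in> g' ` S" using w rr by simp
    ultimately show "mink z (b n) \<ge> 0 \<and> r n z \<in> g' ` S" by blast
  qed
  have fix0: "\<And>n z. mink z (b n) = 0 \<Longrightarrow> r n z = z" by (simp add: r_def hrefl_def)
  have Inv_all: "\<And>n. Inv n"
  proof -
    fix n show "Inv n"
    proof (induction n)
      case 0
      show ?case unfolding Inv_def
      proof (intro ballI allI impI)
        fix g h i j x
        assume g: "g \<in> ?T 0" and h: "h \<in> ?T 0" and i: "i \<in> {1..7}" and j: "j \<in> {1..7}"
          and H: "i \<noteq> j \<and> x \<in> g ` cfacet e i \<and> x \<in> h ` cfacet e j
            \<and> (\<forall>y\<in>P 0. mink y (g (e i)) \<le> 0) \<and> (\<forall>y\<in>P 0. mink y (h (e j)) \<le> 0)"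
        have "g = id" "h = id" using g h by auto
        hence "x \<in> cfacet e i \<inter> cfacet e j" using H by auto
        thus "mink (g (e i)) (h (e j)) = cox_gram i j \<and> cfacet e i \<inter> cfacet e j \<noteq> {}"
          using \<open>g = id\<close> \<open>h = id\<close> gram i j by auto
      qed
    next
      case (Suc n)
      show ?case unfolding Inv_def
      proof (intro ballI allI impI)
        fix g h i j x
        assume g: "g \<in> ?T (Suc n)" and h: "h \<in> ?T (Suc n)" and i: "i \<in> {1..7}" and j: "j \<in> {1..7}"
          and H: "i \<noteq> j \<and> x \<in> g ` cfacet e i \<and> x \<in> h ` cfacet e j
            \<and> (\<forall>y\<in>P (Suc n). mink y (g (e i)) \<le> 0) \<and> (\<forall>y\<in>P (Suc n). mink y (h (e j)) \<le> 0)"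
        have ij: "i \<noteq> j" and xg: "x \<in> g ` cfacet e i" and xh: "x \<in> h ` cfacet e j"
          and S1: "\<forall>y\<in>P (Suc n). mink y (g (e i)) \<le> 0" and S2: "\<forall>y\<in>P (Suc n). mink y (h (e j)) \<le> 0"
          using H by auto
        have D1: "\<forall>y\<in>P n. mink y (g (e i)) \<le> 0" "\<forall>y\<in>P n. mink y (r n (g (e i))) \<le> 0"
          using down[OF S1] by auto
        have D2: "\<forall>y\<in>P n. mink y (h (e j)) \<le> 0" "\<forall>y\<in>P n. mink y (r n (h (e j))) \<le> 0"
          using down[OF S2] by auto
        have IH: "\<And>g h x. g \<in> ?T n \<Longrightarrow> h \<in> ?T n \<Longrightarrow> x \<in> g ` cfacet e i \<Longrightarrow> x \<in> h ` cfacet e j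
            \<Longrightarrow> (\<forall>y\<in>P n. mink y (g (e i)) \<le> 0) \<Longrightarrow> (\<forall>y\<in>P n. mink y (h (e j)) \<le> 0)
            \<Longrightarrow> mink (g (e i)) (h (e j)) = cox_gram i j \<and> cfacet e i \<inter> cfacet e j \<noteq> {}"
        proof -
          fix g h x assume a1: "g \<in> ?T n" and a2: "h \<in> ?T n" and a3: "x \<in> g ` cfacet e i"
            and a4: "x \<in> h ` cfacet e j" and a5: "\<forall>y\<in>P n. mink y (g (e i)) \<le> 0"
            and a6: "\<forall>y\<in>P n. mink y (h (e j)) \<le> 0"
          show "mink (g (e i)) (h (e j)) = cox_gram i j \<and> cfacet e i \<inter> cfacet e j \<noteq> {}"
            by (rule Suc.IH[unfolded Inv_def, rule_format, OF a1 a2 i j, of x]) (intro conjI ij a3 a4 a5 a6)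
        qed
        have gc: "g \<in> ?T n \<or> (\<exists>g'\<in>?T n. g = r n \<circ> g')" using g Tsuc by auto
        have hc: "h \<in> ?T n \<or> (\<exists>h'\<in>?T n. h = r n \<circ> h')" using h Tsuc by auto
        show "mink (g (e i)) (h (e j)) = cox_gram i j \<and> cfacet e i \<inter> cfacet e j \<noteq> {}"
        proof (cases "g \<in> ?T n")
          case gT: True
          show ?thesis
          proof (cases "h \<in> ?T n")
            case True
            show ?thesis by (rule IH[OF gT True xg xh D1(1) D2(1)])
          next
            case False
            then obtain h' where h': "h' \<in> ?T n" "h = r n \<circ> h'" using hc by blast
            have m1: "mink x (b n) \<le> 0" using unref[OF gT xg cfP0] by blast
            have m2: "mink x (b n) \<ge> 0" and xh1: "r n x \<in> h' ` cfacet e j"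
              using isref[OF h'(1) _ cfP0, of x] xh h'(2) by auto
            have xb: "mink x (b n) = 0" using m1 m2 by simp
            have xh': "x \<in> h' ` cfacet e j" using xh1 fix0[OF xb] by simp
            have E1: "\<forall>y\<in>P n. mink y (r n (h' (e j))) \<le> 0" using D2(1) h'(2) by simp
            have E2: "\<forall>y\<in>P n. mink y (h' (e j)) \<le> 0" using D2(2) h'(2) rr by simp
            have "mink (g (e i)) (r n (h' (e j))) = cox_gram i j \<and> cfacet e i \<inter> cfacet e j \<noteq> {}"
              using mixed[OF Suc.IH gT h'(1) i j ij xg xh' xb D1(1) D1(2) E2 E1] by blast
            thus ?thesis using h'(2) by simp
          qed
        next
          case gF: False
          then obtain g' where g': "g' \<in> ?T n" "g = r n \<circ> g'" using gc by blast
          have m2: "mink x (b n) \<ge> 0" and xg1: "r n x \<in> g' ` cfacet e i"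
            using isref[OF g'(1) _ cfP0, of x] xg g'(2) by auto
          have E1: "\<forall>y\<in>P n. mink y (r n (g' (e i))) \<le> 0" using D1(1) g'(2) by simp
          have E2: "\<forall>y\<in>P n. mink y (g' (e i)) \<le> 0" using D1(2) g'(2) rr by simp
          show ?thesis
          proof (cases "h \<in> ?T n")
            case hT: True
            have m1: "mink x (b n) \<le> 0" using unref[OF hT xh cfP0] by blast
            have xb: "mink x (b n) = 0" using m1 m2 by simp
            have xg': "x \<in> g' ` cfacet e i" using xg1 fix0[OF xb] by simp
            have "mink (r n (g' (e i))) (h (e j)) = cox_gram i j \<and> cfacet e i \<inter> cfacet e j \<noteq> {}"
              using mixed[OF Suc.IH g'(1) hT i j ij xg' xh xb E2 E1 D2(1) D2(2)] by blast
            thus ?thesis using g'(2) by simp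
          next
            case False
            then obtain h' where h': "h' \<in> ?T n" "h = r n \<circ> h'" using hc by blast
            have xh1: "r n x \<in> h' ` cfacet e j"
              using isref[OF h'(1) _ cfP0, of x] xh h'(2) by auto
            have F1: "\<forall>y\<in>P n. mink y (h' (e j)) \<le> 0" using D2(2) h'(2) rr by simp
            have "mink (g' (e i)) (h' (e j)) = cox_gram i j \<and> cfacet e i \<inter> cfacet e j \<noteq> {}"
              by (rule IH[OF g'(1) h'(1) xg1 xh1 E2 F1])
            thus ?thesis using g'(2) h'(2) rmink by simp
          qed
        qed
      qed
    qed
  qed
  have tile_of: "\<And>n G i x. of_type e P F n G i \<Longrightarrow> x \<in> G \<Longrightarrow>
      \<exists>g. g \<in> ?T n \<and> g ` cfacet e i \<subseteq> G \<and> x \<in> g ` cfacet e i"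
  proof -
    fix n G i x assume o: "of_type e P F n G i" and x: "x \<in> G"
    have "x \<in> \<Union> {g ` cfacet e i | g. g \<in> ?T n \<and> g ` cfacet e i \<subseteq> G}"
      using o x unfolding of_type_def by blast
    thus "\<exists>g. g \<in> ?T n \<and> g ` cfacet e i \<subseteq> G \<and> x \<in> g ` cfacet e i" by blast
  qed
  have nrm: "\<And>n G i g. is_facet (P n) G \<Longrightarrow> i \<in> {1..7} \<Longrightarrow> g \<in> ?T n \<Longrightarrow> g ` cfacet e i \<subseteq> G
      \<Longrightarrow> normal (P n) G = g (e i) \<and> (\<forall>y\<in>P n. mink y (g (e i)) \<le> 0)"
  proof -
    fix n G i g assume f: "is_facet (P n) G" and i: "i \<in> {1..7}" and g: "g \<in> ?T n"
      and sub: "g ` cfacet e i \<subseteq> G"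
    have sG: "supports (P n) G (normal (P n) G)" by (rule normal_supports[OF gram facets0 P0sub f])
    have aa: "mink (normal (P n) G) (normal (P n) G) = 1" using sG by (simp add: supports_def)
    have aQ: "\<forall>y\<in>P n. mink y (normal (P n) G) \<le> 0" using sG by (auto simp: supports_def halfspace_def)
    have o: "\<forall>z\<in>cfacet e i. mink (g z) (normal (P n) G) = 0"
      using sG sub by (auto simp: supports_def hplane_def)
    have gi: "isom g" and gP: "g ` ?P0 \<subseteq> P n" using tprop[OF g] by auto
    have "normal (P n) G = g (e i)"
      by (rule facet_normal_tile[OF gram facets0 gi gP i aa aQ o])
    thus "normal (P n) G = g (e i) \<and> (\<forall>y\<in>P n. mink y (g (e i)) \<le> 0)" using aQ by simp
  qed
  have n0: "\<And>i. i \<in> {1..7} \<Longrightarrow> normal ?P0 (cfacet e i) = e i"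
  proof -
    fix i :: nat assume i: "i \<in> {1..7}"
    have "supports ?P0 (cfacet e i) (e i)"
      using ee[OF i] i by (auto simp: supports_def halfspace_def polytope_of_def cfacet_def)
    moreover have "dim (cfacet e i) = 4" using facets0 i by (simp add: is_facet_def)
    ultimately show "normal ?P0 (cfacet e i) = e i" using normal_eq[OF gram facets0 subset_refl] by blast
  qed
  show ?thesis
  proof (intro allI impI)
    fix n i j G K
    assume A: "i \<in> {1..7} \<and> j \<in> {1..7} \<and> i \<noteq> j
           \<and> is_facet (P n) G \<and> is_facet (P n) K
           \<and> of_type e P F n G i \<and> of_type e P F n K j \<and> G \<inter> K \<noteq> {}"
    hence i: "i \<in> {1..7}" and j: "j \<in> {1..7}" and ij: "i \<noteq> j" and fG: "is_facet (P n) G"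
      and fK: "is_facet (P n) K" and oG: "of_type e P F n G i" and oK: "of_type e P F n K j"
      and ne: "G \<inter> K \<noteq> {}" by auto
    obtain x where xG: "x \<in> G" and xK: "x \<in> K" using ne by blast
    obtain g where g: "g \<in> ?T n" "g ` cfacet e i \<subseteq> G" "x \<in> g ` cfacet e i" using tile_of[OF oG xG] by blast
    obtain h where h: "h \<in> ?T n" "h ` cfacet e j \<subseteq> K" "x \<in> h ` cfacet e j" using tile_of[OF oK xK] by blast
    have NG: "normal (P n) G = g (e i)" and BG: "\<forall>y\<in>P n. mink y (g (e i)) \<le> 0"
      using nrm[OF fG i g(1) g(2)] by auto
    have NK: "normal (P n) K = h (e j)" and BK: "\<forall>y\<in>P n. mink y (h (e j)) \<le> 0"
      using nrm[OF fK j h(1) h(2)] by auto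
    have R: "mink (g (e i)) (h (e j)) = cox_gram i j \<and> cfacet e i \<inter> cfacet e j \<noteq> {}"
      by (rule Inv_all[unfolded Inv_def, rule_format, OF g(1) h(1) i j, of x]) (intro conjI ij g(3) h(3) BG BK)
    have "dihedral (P n) G K = arccos (- cox_gram i j)"
      using R NG NK by (simp add: dihedral_def)
    moreover have "dihedral ?P0 (cfacet e i) (cfacet e j) = arccos (- cox_gram i j)"
      using n0[OF i] n0[OF j] gram i j by (simp add: dihedral_def)
    ultimately show "dihedral (P n) G K = dihedral ?P0 (cfacet e i) (cfacet e j)
               \<and> cfacet e i \<inter> cfacet e j \<noteq> {}" using R by simp
  qed
qed

end
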